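(* Let $G=\mathbb{Z}_2\times\mathbb{Z}_4$ and let $\theta_1,\theta_2$ be normalised orthomorphisms of $G$ with $|A_{44}\cap A'_{44}|=2$. Then $\theta_1$ and $\theta_2$ are not orthogonal.
   Context: $G$ is written multiplicatively with identity $e$; $o(g)$ is the order of $g$. A normalised orthomorphism of $G$ is a bijection $\theta\colon G\to G$ with $\theta(e)=e$ such that $x\mapsto x^{-1}\theta(x)$ is a bijection of $G$. Two orthomorphisms are orthogonal if $x\mapsto\theta_1(x)^{-1}\theta_2(x)$ is a bijection of $G$. $A_{44}=\{x: o(x)=4, o(\theta_1(x))=4\}$ and $A'_{44}=\{x: o(x)=4, o(\theta_2(x))=4\}$. *)

theory Defs
  imports Main "HOL-Library.Numeral_Type" "HOL-Library.Product_Plus"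
begin

text \<open>Groups are written additively (type class group_add); the identity is 0,
  x^{-1} y becomes - x + y.  The order o(x) is the least positive n with n x = 0.\<close>

definition elem_order :: "'a::group_add \<Rightarrow> nat" where
  "elem_order x = (LEAST n::nat. 0 < n \<and> (((+) x) ^^ n) 0 = 0)"

definition normalised_orthomorphism :: "('a::group_add \<Rightarrow> 'a) \<Rightarrow> bool" where
  "normalised_orthomorphism \<theta> \<longleftrightarrow> bij \<theta> \<and> \<theta> 0 = 0 \<and> bij (\<lambda>x. - x + \<theta> x)"

definition orthogonal_orth :: "('a::group_add \<Rightarrow> 'a) \<Rightarrow> ('a \<Rightarrow> 'a) \<Rightarrow> bool" where
  "orthogonal_orth \<theta>1 \<theta>2 \<longleftrightarrow> bij (\<lambda>x. - \<theta>1 x + \<theta>2 x)"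

definition A44 :: "('a::group_add \<Rightarrow> 'a) \<Rightarrow> 'a set" where
  "A44 \<theta> = {x. elem_order x = 4 \<and> elem_order (\<theta> x) = 4}"

end

theory Submission
  imports Defs
begin

lemma ex2: fixes x :: 2 shows "x = 0 \<or> x = 1"
proof (induct x)
  case (of_int z)
  then have "z = 0 | z = 1" by fastforce
  then show ?case by auto
qed

lemma ex4: fixes x :: 4 shows "x = 0 \<or> x = 1 \<or> x = 2 \<or> x = 3"
proof (induct x)
  case (of_int z)
  then have "z = 0 \<or> z = 1 \<or> z = 2 \<or> z = 3" by fastforce
  then show ?case by auto
qed

lemma UNIV24: "(UNIV :: (2 \<times> 4) set) = {(0,0),(0,1),(0,2),(0,3),(1,0),(1,1),(1,2),(1,3)}"
proof -
  have "\<And>a::2. \<And>b::4. (a,b) \<in> {(0,0),(0,1),(0,2),(0,3),(1,0),(1,1),(1,2),(1,3)}"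
    subgoal for a b using ex2[of a] ex4[of b] by auto
    done
  then show ?thesis by auto
qed

lemma all24: "(\<forall>x::2\<times>4. P x) \<longleftrightarrow> P (0,0) \<and> P (0,1) \<and> P (0,2) \<and> P (0,3) \<and> P (1,0) \<and> P (1,1) \<and> P (1,2) \<and> P (1,3)"
  by (metis UNIV24 UNIV_I insertE empty_iff)

lemma four0: "(x::2\<times>4) + x + x + x = 0"
proof -
  obtain a b where x: "x = (a,b)" by fastforce
  show ?thesis unfolding x using ex2[of a] ex4[of b] by (auto simp: zero_prod_def)
qed

lemma dbl: "(x::2\<times>4) + x = 0 \<or> x + x = (0,2)"
proof -
  obtain a b where x: "x = (a,b)" by fastforce
  show ?thesis unfolding x using ex2[of a] ex4[of b] by (auto simp: zero_prod_def)
qed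

lemma ord4: "elem_order (x::2\<times>4) = 4 \<longleftrightarrow> x + x \<noteq> 0"
proof
  assume h: "elem_order x = 4"
  show "x + x \<noteq> 0"
  proof
    assume "x + x = 0"
    then have "((+) x ^^ 2) 0 = 0" by (simp add: numeral_eq_Suc)
    then have "elem_order x \<le> 2" unfolding elem_order_def by (intro Least_le) simp
    with h show False by simp
  qed
next
  assume h: "x + x \<noteq> 0"
  have x0: "x \<noteq> 0" using h by auto
  have x3: "x + x + x \<noteq> 0"
  proof
    assume "x + x + x = 0"
    then have "x = 0" using four0[of x] by (simp add: add.assoc)
    with x0 show False by simp
  qed
  have p: "\<And>n. ((+) x ^^ n) 0 = 0 \<Longrightarrow> 0 < n \<Longrightarrow> 4 \<le> n"
  proof -
    fix n :: nat assume a: "((+) x ^^ n) 0 = 0" "0 < n"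
    show "4 \<le> n"
    proof (rule ccontr)
      assume "\<not> 4 \<le> n"
      then have "n = 1 \<or> n = 2 \<or> n = 3" using a(2) by auto
      then show False using a(1) x0 h x3 by (auto simp: numeral_eq_Suc add.assoc)
    qed
  qed
  show "elem_order x = 4" unfolding elem_order_def
    apply (rule Least_equality)
    using four0[of x] p by (auto simp: numeral_eq_Suc add.assoc)
qed

definition R :: "2\<times>4 \<Rightarrow> bool" where "R x \<longleftrightarrow> x + x \<noteq> 0"

lemma R_diff: "R (- x + y) \<longleftrightarrow> R x \<noteq> R y"
proof -
  have e: "(- x + y) + (- x + y) = - (x + x) + (y + y)" by (simp add: algebra_simps)
  have c: "- ((0::2,2::4)) = (0,2)" "(0::2\<times>4) \<noteq> (0,2)" by (simp_all add: zero_prod_def)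
  show ?thesis unfolding R_def e using dbl[of x] dbl[of y] c
    by (elim disjE) (simp_all only: add_0_left add_0_right minus_zero c, simp_all add: zero_prod_def)
qed

lemma cardR: "card {x. R x} = 4"
proof -
  have "{x. R x} = {(0,1),(0,3),(1,1),(1,3)}"
  proof (rule set_eqI)
    fix x :: "2\<times>4"
    obtain a b where x: "x = (a,b)" by fastforce
    show "x \<in> {x. R x} \<longleftrightarrow> x \<in> {(0,1),(0,3),(1,1),(1,3)}"
      unfolding x R_def using ex2[of a] ex4[of b] by (auto simp: zero_prod_def)
  qed
  then show ?thesis by simp
qed

lemma card_bij_pre: assumes "bij f" shows "card {x. P (f x)} = card {y. P y}"
proof -
  have "{x. P (f x)} = f -` {y. P y}" by auto
  moreover have "card (f -` {y. P y}) = card {y. P y}"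
    using assms by (intro card_vimage_inj) (auto simp: bij_def)
  ultimately show ?thesis by simp
qed

lemma card_neq: assumes "normalised_orthomorphism t" shows "card {x. R x \<noteq> R (t x)} = 4"
proof -
  have b: "bij (\<lambda>x. - x + t x)" using assms unfolding normalised_orthomorphism_def by simp
  have "{x. R x \<noteq> R (t x)} = {x. R (- x + t x)}" using R_diff by auto
  then show ?thesis using card_bij_pre[OF b, of R] cardR by simp
qed

lemma cnt: "(\<Sum>x\<in>(UNIV::(2\<times>4) set). (if P x then 1 else 0::int)) = int (card {x. P x})"
  by (simp add: sum.If_cases)

theorem proposition2:
  fixes \<theta>1 \<theta>2 :: "2 \<times> 4 \<Rightarrow> 2 \<times> 4"
  assumes "normalised_orthomorphism \<theta>1"
    and "normalised_orthomorphism \<theta>2"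
    and "card (A44 \<theta>1 \<inter> A44 \<theta>2) = 2"
  shows "\<not> orthogonal_orth \<theta>1 \<theta>2"
proof
  assume o: "orthogonal_orth \<theta>1 \<theta>2"
  define r where "r x = R x" for x
  define p where "p x = R (\<theta>1 x)" for x
  define q where "q x = R (\<theta>2 x)" for x
  have c1: "card {x. r x \<noteq> p x} = 4" using card_neq[OF assms(1)] by (simp add: r_def p_def)
  have c2: "card {x. r x \<noteq> q x} = 4" using card_neq[OF assms(2)] by (simp add: r_def q_def)
  have "card {x. R (- \<theta>1 x + \<theta>2 x)} = 4"
    using card_bij_pre[of "\<lambda>x. - \<theta>1 x + \<theta>2 x" R] o cardR unfolding orthogonal_orth_def by simp
  then have c3: "card {x. p x \<noteq> q x} = 4" using R_diff by (simp add: p_def q_def)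
  have "A44 \<theta>1 \<inter> A44 \<theta>2 = {x. r x \<and> p x \<and> q x}"
    unfolding A44_def r_def p_def q_def R_def using ord4 by auto
  then have c4: "card {x. r x \<and> p x \<and> q x} = 2" using assms(3) by simp
  define f where "f x = (if \<not> r x \<and> \<not> p x \<and> \<not> q x then 2 else 0::int)" for x
  have pw: "f x = 2 - (if r x \<noteq> p x then 1 else 0) - (if r x \<noteq> q x then 1 else 0)
     - (if p x \<noteq> q x then 1 else 0) - 2 * (if r x \<and> p x \<and> q x then 1 else 0)" for x
    unfolding f_def by auto
  have "(\<Sum>x\<in>UNIV. f x) = (\<Sum>x\<in>(UNIV::(2\<times>4) set). 2) - (\<Sum>x\<in>UNIV. (if r x \<noteq> p x then 1 else 0))
     - (\<Sum>x\<in>UNIV. (if r x \<noteq> q x then 1 else 0)) - (\<Sum>x\<in>UNIV. (if p x \<noteq> q x then 1 else 0))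
     - 2 * (\<Sum>x\<in>UNIV. (if r x \<and> p x \<and> q x then 1 else 0))"
    unfolding pw by (simp add: sum_subtractf sum_distrib_left)
  also have "\<dots> = 0" unfolding cnt c1 c2 c3 c4 by (simp add: UNIV24)
  finally have s0: "(\<Sum>x\<in>UNIV. f x) = 0" .
  have t0: "\<theta>1 0 = 0" "\<theta>2 0 = 0" using assms unfolding normalised_orthomorphism_def by auto
  have "f 0 = 2" unfolding f_def r_def p_def q_def R_def t0 by simp
  moreover have "f 0 \<le> (\<Sum>x\<in>UNIV. f x)"
    by (rule member_le_sum) (auto simp: f_def)
  ultimately show False using s0 by simp
qed

end
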